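(* Let $\mathcal{E}=(\mathbf{R},\mathbf{S},\Sigma_{st},\mathbf{F})$ be a consistent constructive relational to RDF data exchange setting and let $\mathcal{Q}$ be a class of Boolean graph queries robust under simulation. For any query $Q\in\mathcal{Q}$ and any consistent instance $I$ of $\mathbf{R}$, $\mathit{true}$ is the certain answer to $Q$ in $I$ w.r.t. $\mathcal{E}$ if and only if $Q$ is true in every universal simulation solution to $\mathcal{E}$ for $I$.
   Context: Values: $\mathsf{Iri}$ (IRIs, containing predicates $\mathsf{Pred}$), $\mathsf{NullIri}$, $\mathsf{Lit}$ with null literals $\mathsf{NullLit}\subseteq\mathsf{Lit}$; null values are those in $\mathsf{NullLit}\cup\mathsf{NullIri}$, other values are constants. $\mathbf{R}=(\mathcal{R},\Sigma_{fd})$: relation names with arities and functional dependencies; an instance assigns finite sets of tuples of non-null literals to relation names and is consistent if it satisfies $\Sigma_{fd}$. A typed graph: finite set of triples $(s,p,o)$, $s\in\mathsf{Iri}\cup\mathsf{NullIri}$, $p\in\mathsf{Pred}$, $o\in\mathsf{Iri}\cup\mathsf{NullIri}\cup\mathsf{Lit}$, with type facts $T(n)$ ($T\in\mathcal{T}$) and $\mathit{Literal}(n)$ (literal nodes only of type $\mathit{Literal}$, others only of types in $\mathcal{T}$). Deterministic shape schema $\mathbf{S}=(\mathcal{T},\delta)$: partial $\delta:\mathcal{T}\times\mathsf{Pred}\to(\mathcal{T}\cup\{\mathit{Literal}\})\times\{1,?,*,+\}$; a typed graph satisfies it iff for each $\delta(T,p)=S^\mu$, every $p$-successor of a $T$-typed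 node has type $S$, with at most one such successor if $\mu\in\{1,?\}$ and at least one if $\mu\in\{1,+\}$. Constructive setting: IRI constructors $f\in\mathcal{F}$ interpreted as $f^F:\mathsf{Lit}^n\to\mathsf{Iri}$ (constants) with pairwise disjoint ranges; full st-tgds $\forall\bar x.\,\varphi\Rightarrow\psi$, $\varphi$ a conjunction of atoms over $\mathcal{R}$, $\psi$ a conjunction of atoms $\mathit{Triple}(t_1,p,t_2)$, $T(t)$, $\mathit{Literal}(t)$ with terms variables or $f(\bar u)$. A solution for $I$ is a typed graph satisfying $\mathbf{S}$ that together with $I$ satisfies $\Sigma_{st}$; $\mathcal{E}$ is consistent if every consistent instance has a solution. $\mathit{true}$ is the certain answer to a Boolean query $Q$ in $I$ w.r.t. $\mathcal{E}$ iff $Q$ is true in every solution for $I$. Simulation (on the underlying graphs): a relation $R$ between nodes of $G$ and $H$ such that for $(n,m)\in R$: $n$ literal iff $m$ literal; if $n$ is not null then $n=m$; every edge $(n,p,n')\in G$ is matched by some $(m,p,m')\in H$ with $(n',m')\in R$. $G$ is simulated by $H$ if every node of $G$ is related by some simulation to some node of $H$. A class of Boolean queries is robust under simulation if, whenever $G$ is simulated by $H$, every query of the class true in $G$ is true in $H$. A universal simulation solution to $\mathcal{E}$ for $I$ is a solution $\mathcal{U}$ for $I$ that is simulated by every solution for $I$. *)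

theory Defs
  imports Main
begin

text \<open>Nodes/values: constant IRIs, null IRIs, constant (non-null) literals, null literals.
  The set Lit of the paper is the union of the constant and the null literals.\<close>
datatype ('i, 'l) node = Iri 'i | NullIri nat | Lit 'l | NullLit nat

fun is_null :: "('i, 'l) node \<Rightarrow> bool" where
  "is_null (NullIri _) = True"
| "is_null (NullLit _) = True"
| "is_null _ = False"

fun is_literal :: "('i, 'l) node \<Rightarrow> bool" where
  "is_literal (Lit _) = True"
| "is_literal (NullLit _) = True"
| "is_literal _ = False"

text \<open>A functional dependency (R, X, Y) says: positions X determine positions Y in relation R.\<close>
type_synonym 'r fd = "'r \<times> nat set \<times> nat set"

type_synonym ('r, 'l) rinstance = "'r \<Rightarrow> 'l list set"

definition is_instance :: "('r \<Rightarrow> nat) \<Rightarrow> ('r, 'l) rinstance \<Rightarrow> bool" where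
  "is_instance ar I \<longleftrightarrow> (\<forall>R. finite (I R) \<and> (\<forall>t\<in>I R. length t = ar R))"

definition satisfies_fd :: "('r, 'l) rinstance \<Rightarrow> 'r fd \<Rightarrow> bool" where
  "satisfies_fd I fd \<longleftrightarrow> (case fd of (R, X, Y) \<Rightarrow>
     (\<forall>t\<in>I R. \<forall>t'\<in>I R. (\<forall>i\<in>X. t ! i = t' ! i) \<longrightarrow> (\<forall>j\<in>Y. t ! j = t' ! j)))"

definition consistent_instance :: "'r fd set \<Rightarrow> ('r, 'l) rinstance \<Rightarrow> bool" where
  "consistent_instance fds I \<longleftrightarrow> (\<forall>fd\<in>fds. satisfies_fd I fd)"

datatype mult = One | Opt | Star | Plus

datatype 't sty = Ty 't | LiteralTy

type_synonym ('i, 'l) triple = "('i, 'l) node \<times> 'i \<times> ('i, 'l) node"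
type_synonym ('i, 'l) graph = "('i, 'l) triple set"
text \<open>A typed graph: the set of triples together with the set of type facts.\<close>
type_synonym ('i, 'l, 't) tgraph = "('i, 'l) graph \<times> (('i, 'l) node \<times> 't sty) set"

definition wf_tgraph :: "'i set \<Rightarrow> ('i, 'l, 't) tgraph \<Rightarrow> bool" where
  "wf_tgraph Pred G \<longleftrightarrow>
     finite (fst G) \<and> finite (snd G) \<and>
     (\<forall>(s, p, ob) \<in> fst G. \<not> is_literal s \<and> p \<in> Pred) \<and>
     (\<forall>n. (n, LiteralTy) \<in> snd G \<longrightarrow> is_literal n) \<and>
     (\<forall>n T. (n, Ty T) \<in> snd G \<longrightarrow> \<not> is_literal n)"

type_synonym ('t, 'i) shape_schema = "'t \<Rightarrow> 'i \<Rightarrow> ('t sty \<times> mult) option"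

definition satisfies_schema :: "('t, 'i) shape_schema \<Rightarrow> ('i, 'l, 't) tgraph \<Rightarrow> bool" where
  "satisfies_schema \<delta> G \<longleftrightarrow>
     (\<forall>T p S \<mu>. \<delta> T p = Some (S, \<mu>) \<longrightarrow>
        (\<forall>n. (n, Ty T) \<in> snd G \<longrightarrow>
           (\<forall>m. (n, p, m) \<in> fst G \<longrightarrow> (m, S) \<in> snd G) \<and>
           (\<mu> \<in> {One, Opt} \<longrightarrow> (\<forall>m m'. (n, p, m) \<in> fst G \<longrightarrow> (n, p, m') \<in> fst G \<longrightarrow> m = m')) \<and>
           (\<mu> \<in> {One, Plus} \<longrightarrow> (\<exists>m. (n, p, m) \<in> fst G))))"

datatype ('v, 'f) tterm = Var 'v | Fn 'f "'v list"

datatype ('v, 'f, 'i, 't) hatom =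
    TripleA "('v, 'f) tterm" 'i "('v, 'f) tterm"
  | TypeA 't "('v, 'f) tterm"
  | LiteralA "('v, 'f) tterm"

text \<open>A full st-tgd: body (conjunction of relational atoms) and head.\<close>
type_synonym ('r, 'v, 'f, 'i, 't) sttgd = "('r \<times> 'v list) list \<times> ('v, 'f, 'i, 't) hatom list"

fun tterm_vars :: "('v, 'f) tterm \<Rightarrow> 'v set" where
  "tterm_vars (Var x) = {x}"
| "tterm_vars (Fn f xs) = set xs"

fun hatom_vars :: "('v, 'f, 'i, 't) hatom \<Rightarrow> 'v set" where
  "hatom_vars (TripleA s p ob) = tterm_vars s \<union> tterm_vars ob"
| "hatom_vars (TypeA T t) = tterm_vars t"
| "hatom_vars (LiteralA t) = tterm_vars t"

fun wf_tterm :: "('f \<Rightarrow> nat) \<Rightarrow> ('v, 'f) tterm \<Rightarrow> bool" where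
  "wf_tterm far (Var x) = True"
| "wf_tterm far (Fn f xs) = (length xs = far f)"

fun wf_hatom :: "'i set \<Rightarrow> ('f \<Rightarrow> nat) \<Rightarrow> ('v, 'f, 'i, 't) hatom \<Rightarrow> bool" where
  "wf_hatom Pred far (TripleA s p ob) = (p \<in> Pred \<and> wf_tterm far s \<and> wf_tterm far ob)"
| "wf_hatom Pred far (TypeA T t) = wf_tterm far t"
| "wf_hatom Pred far (LiteralA t) = wf_tterm far t"

definition wf_sttgd :: "('r \<Rightarrow> nat) \<Rightarrow> 'i set \<Rightarrow> ('f \<Rightarrow> nat) \<Rightarrow> ('r, 'v, 'f, 'i, 't) sttgd \<Rightarrow> bool" where
  "wf_sttgd ar Pred far d \<longleftrightarrow>
     (\<forall>(R, xs) \<in> set (fst d). length xs = ar R) \<and>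
     (\<forall>a \<in> set (snd d). wf_hatom Pred far a) \<and>
     (\<Union>a \<in> set (snd d). hatom_vars a) \<subseteq> (\<Union>(R, xs) \<in> set (fst d). set xs)"

fun eval_tterm :: "('f \<Rightarrow> 'l list \<Rightarrow> 'i) \<Rightarrow> ('v \<Rightarrow> 'l) \<Rightarrow> ('v, 'f) tterm \<Rightarrow> ('i, 'l) node" where
  "eval_tterm F \<nu> (Var x) = Lit (\<nu> x)"
| "eval_tterm F \<nu> (Fn f xs) = Iri (F f (map \<nu> xs))"

fun holds_hatom :: "('f \<Rightarrow> 'l list \<Rightarrow> 'i) \<Rightarrow> ('i, 'l, 't) tgraph \<Rightarrow> ('v \<Rightarrow> 'l) \<Rightarrow> ('v, 'f, 'i, 't) hatom \<Rightarrow> bool" where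
  "holds_hatom F G \<nu> (TripleA s p ob) = ((eval_tterm F \<nu> s, p, eval_tterm F \<nu> ob) \<in> fst G)"
| "holds_hatom F G \<nu> (TypeA T t) = ((eval_tterm F \<nu> t, Ty T) \<in> snd G)"
| "holds_hatom F G \<nu> (LiteralA t) = ((eval_tterm F \<nu> t, LiteralTy) \<in> snd G)"

text \<open>Body variables can only be bound to values of I, i.e.
  non-null constant literals.\<close>
definition satisfies_sttgd ::
  "('f \<Rightarrow> 'l list \<Rightarrow> 'i) \<Rightarrow> ('r, 'l) rinstance \<Rightarrow> ('i, 'l, 't) tgraph \<Rightarrow> ('r, 'v, 'f, 'i, 't) sttgd \<Rightarrow> bool" where
  "satisfies_sttgd F I G d \<longleftrightarrow>
     (\<forall>\<nu>. (\<forall>(R, xs) \<in> set (fst d). map \<nu> xs \<in> I R) \<longrightarrow> (\<forall>a \<in> set (snd d). holds_hatom F G \<nu> a))"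

record ('r, 'i, 't, 'f, 'v, 'l) setting =
  arity :: "'r \<Rightarrow> nat"
  fds :: "'r fd set"
  preds :: "'i set"
  delta :: "('t, 'i) shape_schema"
  sigma :: "('r, 'v, 'f, 'i, 't) sttgd set"
  farity :: "'f \<Rightarrow> nat"
  finterp :: "'f \<Rightarrow> 'l list \<Rightarrow> 'i"

definition wf_setting :: "('r, 'i, 't, 'f, 'v, 'l) setting \<Rightarrow> bool" where
  "wf_setting E \<longleftrightarrow>
     \<comment> \<open>functional dependencies refer to positions of their relation\<close>
     (\<forall>(R, X, Y) \<in> fds E. X \<subseteq> {..<arity E R} \<and> Y \<subseteq> {..<arity E R}) \<and>
     \<comment> \<open>the shape schema has finitely many types and a finite deterministic \<delta> over predicates\<close>
     finite (UNIV :: 't set) \<and>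
     finite {(T, p). delta E T p \<noteq> None} \<and>
     (\<forall>T p. delta E T p \<noteq> None \<longrightarrow> p \<in> preds E) \<and>
     \<comment> \<open>finitely many well-formed full st-tgds\<close>
     finite (sigma E) \<and> (\<forall>d \<in> sigma E. wf_sttgd (arity E) (preds E) (farity E) d) \<and>
     \<comment> \<open>IRI constructors have pairwise disjoint ranges\<close>
     (\<forall>f g xs ys. f \<noteq> g \<longrightarrow> length xs = farity E f \<longrightarrow> length ys = farity E g \<longrightarrow>
        finterp E f xs \<noteq> finterp E g ys)"

definition is_solution :: "('r, 'i, 't, 'f, 'v, 'l) setting \<Rightarrow> ('r, 'l) rinstance \<Rightarrow> ('i, 'l, 't) tgraph \<Rightarrow> bool" where
  "is_solution E I G \<longleftrightarrow>
     wf_tgraph (preds E) G \<and> satisfies_schema (delta E) G \<and>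
     (\<forall>d \<in> sigma E. satisfies_sttgd (finterp E) I G d)"

definition consistent_setting :: "('r, 'i, 't, 'f, 'v, 'l) setting \<Rightarrow> bool" where
  "consistent_setting E \<longleftrightarrow>
     (\<forall>I. is_instance (arity E) I \<longrightarrow> consistent_instance (fds E) I \<longrightarrow> (\<exists>G. is_solution E I G))"

type_synonym ('i, 'l) query = "('i, 'l) graph \<Rightarrow> bool"

definition certain_true :: "('r, 'i, 't, 'f, 'v, 'l) setting \<Rightarrow> ('r, 'l) rinstance \<Rightarrow> ('i, 'l) query \<Rightarrow> bool" where
  "certain_true E I Q \<longleftrightarrow> (\<forall>G. is_solution E I G \<longrightarrow> Q (fst G))"

definition graph_nodes :: "('i, 'l) graph \<Rightarrow> ('i, 'l) node set" where
  "graph_nodes G = {s. \<exists>p ob. (s, p, ob) \<in> G} \<union> {ob. \<exists>s p. (s, p, ob) \<in> G}"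

definition is_simulation :: "(('i, 'l) node \<times> ('i, 'l) node) set \<Rightarrow> ('i, 'l) graph \<Rightarrow> ('i, 'l) graph \<Rightarrow> bool" where
  "is_simulation R G H \<longleftrightarrow>
     (\<forall>(n, m) \<in> R. (is_literal n \<longleftrightarrow> is_literal m) \<and> (\<not> is_null n \<longrightarrow> n = m) \<and>
        (\<forall>p n'. (n, p, n') \<in> G \<longrightarrow> (\<exists>m'. (m, p, m') \<in> H \<and> (n', m') \<in> R)))"

definition simulated_by :: "('i, 'l) graph \<Rightarrow> ('i, 'l) graph \<Rightarrow> bool" where
  "simulated_by G H \<longleftrightarrow> (\<forall>n \<in> graph_nodes G. \<exists>R m. is_simulation R G H \<and> (n, m) \<in> R)"

definition robust_under_simulation :: "('i, 'l) query set \<Rightarrow> bool" where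
  "robust_under_simulation \<Q> \<longleftrightarrow> (\<forall>G H. simulated_by G H \<longrightarrow> (\<forall>Q \<in> \<Q>. Q G \<longrightarrow> Q H))"

definition universal_simulation_solution ::
  "('r, 'i, 't, 'f, 'v, 'l) setting \<Rightarrow> ('r, 'l) rinstance \<Rightarrow> ('i, 'l, 't) tgraph \<Rightarrow> bool" where
  "universal_simulation_solution E I U \<longleftrightarrow>
     is_solution E I U \<and> (\<forall>H. is_solution E I H \<longrightarrow> simulated_by (fst U) (fst H))"

end

theory Submission
  imports Defs
begin

definition tyOf :: "('i, 'l, 't) tgraph \<Rightarrow> ('i, 'l) node \<Rightarrow> 't sty set" where
  "tyOf G n = {S. (n, S) \<in> snd G}"

definition succT :: "('t, 'i) shape_schema \<Rightarrow> 't sty set \<Rightarrow> 'i \<Rightarrow> 't sty set" where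
  "succT d X p = {S. \<exists>T \<mu>. Ty T \<in> X \<and> d T p = Some (S, \<mu>)}"

definition reqT :: "('t, 'i) shape_schema \<Rightarrow> 't sty set \<Rightarrow> 'i \<Rightarrow> bool" where
  "reqT d X p \<longleftrightarrow> (\<exists>T S \<mu>. Ty T \<in> X \<and> d T p = Some (S, \<mu>) \<and> \<mu> \<in> {One, Plus})"

definition nul :: "('t sty set \<Rightarrow> nat) \<Rightarrow> 't sty set \<Rightarrow> ('i, 'l) node" where
  "nul enc X = (if LiteralTy \<in> X then NullLit (enc X) else NullIri (enc X))"

lemma nul_null: "is_null (nul enc X)"
  by (simp add: nul_def)

lemma nul_lit: "is_literal (nul enc X) \<longleftrightarrow> LiteralTy \<in> X"
  by (simp add: nul_def)

lemma nul_inj: "inj enc \<Longrightarrow> nul enc X = nul enc Y \<Longrightarrow> X = Y"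
  by (auto simp: nul_def inj_def split: if_splits)

lemma key:
  assumes "satisfies_schema d H" "wf_tgraph P H" "X \<subseteq> tyOf H m" "reqT d X p"
  shows "\<exists>m'. (m, p, m') \<in> fst H \<and> succT d X p \<subseteq> tyOf H m' \<and>
              (is_literal m' \<longleftrightarrow> LiteralTy \<in> succT d X p)"
proof -
  obtain T S0 \<mu> where T: "Ty T \<in> X" "d T p = Some (S0, \<mu>)" "\<mu> \<in> {One, Plus}"
    using assms(4) unfolding reqT_def by blast
  have mT: "(m, Ty T) \<in> snd H" using T assms(3) by (auto simp: tyOf_def)
  then obtain m' where e: "(m, p, m') \<in> fst H"
    using assms(1) T unfolding satisfies_schema_def by blast
  have sub: "succT d X p \<subseteq> tyOf H m'"
  proof
    fix S assume "S \<in> succT d X p"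
    then obtain T' \<mu>' where "Ty T' \<in> X" "d T' p = Some (S, \<mu>')" by (auto simp: succT_def)
    moreover have "(m, Ty T') \<in> snd H" using \<open>Ty T' \<in> X\<close> assms(3) by (auto simp: tyOf_def)
    ultimately show "S \<in> tyOf H m'"
      using assms(1) e unfolding satisfies_schema_def tyOf_def by blast
  qed
  have S0: "S0 \<in> succT d X p" using T by (auto simp: succT_def)
  have lit: "is_literal m' \<longleftrightarrow> LiteralTy \<in> succT d X p"
  proof (cases "LiteralTy \<in> succT d X p")
    case True
    then have "(m', LiteralTy) \<in> snd H" using sub by (auto simp: tyOf_def)
    then show ?thesis using assms(2) True by (auto simp: wf_tgraph_def)
  next
    case False
    then obtain T0 where "S0 = Ty T0" using S0 by (cases S0) auto
    then have "(m', Ty T0) \<in> snd H" using sub S0 by (auto simp: tyOf_def)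
    then show ?thesis using assms(2) False by (auto simp: wf_tgraph_def)
  qed
  show ?thesis using e sub lit by blast
qed

definition ctrip :: "('r, 'i, 't, 'f, 'v, 'l) setting \<Rightarrow> ('r, 'l) rinstance \<Rightarrow> ('i, 'l) graph" where
  "ctrip E I = {(a, p, b). \<not> is_null a \<and> \<not> is_null b \<and>
                 (\<forall>H. is_solution E I H \<longrightarrow> (a, p, b) \<in> fst H)}"

definition ctyp :: "('r, 'i, 't, 'f, 'v, 'l) setting \<Rightarrow> ('r, 'l) rinstance \<Rightarrow> (('i, 'l) node \<times> 't sty) set" where
  "ctyp E I = {(n, S). \<not> is_null n \<and> (\<forall>H. is_solution E I H \<longrightarrow> (n, S) \<in> snd H)}"

definition realz :: "('r, 'i, 't, 'f, 'v, 'l) setting \<Rightarrow> ('r, 'l) rinstance \<Rightarrow> 't sty set \<Rightarrow> bool" where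
  "realz E I X \<longleftrightarrow> (\<forall>H. is_solution E I H \<longrightarrow>
      (\<exists>m. X \<subseteq> tyOf H m \<and> (is_literal m \<longleftrightarrow> LiteralTy \<in> X)))"

definition ctyOf :: "('r, 'i, 't, 'f, 'v, 'l) setting \<Rightarrow> ('r, 'l) rinstance \<Rightarrow> ('i, 'l) node \<Rightarrow> 't sty set" where
  "ctyOf E I n = {S. (n, S) \<in> ctyp E I}"

definition cedges :: "('r, 'i, 't, 'f, 'v, 'l) setting \<Rightarrow> ('r, 'l) rinstance \<Rightarrow> ('t sty set \<Rightarrow> nat) \<Rightarrow> ('i, 'l) graph" where
  "cedges E I enc = {(n, p, nul enc (succT (delta E) (ctyOf E I n) p)) | n p.
       \<not> is_null n \<and> reqT (delta E) (ctyOf E I n) p \<and> \<not> (\<exists>m. (n, p, m) \<in> ctrip E I)}"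

definition nedges :: "('r, 'i, 't, 'f, 'v, 'l) setting \<Rightarrow> ('r, 'l) rinstance \<Rightarrow> ('t sty set \<Rightarrow> nat) \<Rightarrow> ('i, 'l) graph" where
  "nedges E I enc = {(nul enc X, p, nul enc (succT (delta E) X p)) | X p.
       realz E I X \<and> reqT (delta E) X p}"

definition ntyp :: "('r, 'i, 't, 'f, 'v, 'l) setting \<Rightarrow> ('r, 'l) rinstance \<Rightarrow> ('t sty set \<Rightarrow> nat) \<Rightarrow> (('i, 'l) node \<times> 't sty) set" where
  "ntyp E I enc = {(nul enc X, S) | X S. realz E I X \<and> S \<in> X}"

definition Ucan :: "('r, 'i, 't, 'f, 'v, 'l) setting \<Rightarrow> ('r, 'l) rinstance \<Rightarrow> ('t sty set \<Rightarrow> nat) \<Rightarrow> ('i, 'l, 't) tgraph" where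
  "Ucan E I enc = (ctrip E I \<union> cedges E I enc \<union> nedges E I enc, ctyp E I \<union> ntyp E I enc)"

lemma cedges_iff: "(a, p, b) \<in> cedges E I enc \<longleftrightarrow> \<not> is_null a \<and> reqT (delta E) (ctyOf E I a) p \<and>
   \<not> (\<exists>m. (a, p, m) \<in> ctrip E I) \<and> b = nul enc (succT (delta E) (ctyOf E I a) p)"
  unfolding cedges_def by blast

lemma nedges_iff: "(a, p, b) \<in> nedges E I enc \<longleftrightarrow> (\<exists>X. a = nul enc X \<and> realz E I X \<and> reqT (delta E) X p \<and>
   b = nul enc (succT (delta E) X p))"
  unfolding nedges_def by blast

lemma ntyp_iff: "(a, S) \<in> ntyp E I enc \<longleftrightarrow> (\<exists>X. a = nul enc X \<and> realz E I X \<and> S \<in> X)"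
  unfolding ntyp_def by blast

lemma ctrip_iff: "(a, p, b) \<in> ctrip E I \<longleftrightarrow> \<not> is_null a \<and> \<not> is_null b \<and>
                 (\<forall>H. is_solution E I H \<longrightarrow> (a, p, b) \<in> fst H)"
  unfolding ctrip_def by blast

lemma ctyp_iff: "(a, S) \<in> ctyp E I \<longleftrightarrow> \<not> is_null a \<and> (\<forall>H. is_solution E I H \<longrightarrow> (a, S) \<in> snd H)"
  unfolding ctyp_def by blast

lemma eval_nonnull: "\<not> is_null (eval_tterm F \<nu> t)"
  by (cases t) auto

locale ctx =
  fixes E :: "('r, 'i, 't, 'f, 'v, 'l) setting" and I :: "('r, 'l) rinstance"
    and enc :: "'t sty set \<Rightarrow> nat" and G0 :: "('i, 'l, 't) tgraph"
  assumes wf: "wf_setting E" and inj: "inj enc" and sol0: "is_solution E I G0"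
begin

lemma ctyp_sub: "is_solution E I H \<Longrightarrow> ctyp E I \<subseteq> snd H"
  unfolding ctyp_def by blast

lemma ctrip_sub: "is_solution E I H \<Longrightarrow> ctrip E I \<subseteq> fst H"
  unfolding ctrip_def by blast

lemma ctyOf_sub: "is_solution E I H \<Longrightarrow> ctyOf E I n \<subseteq> tyOf H n"
  unfolding ctyp_def ctyOf_def tyOf_def by blast

lemma realz_succ:
  assumes "realz E I X" "reqT (delta E) X p"
  shows "realz E I (succT (delta E) X p)"
  unfolding realz_def
proof (intro allI impI)
  fix H assume H: "is_solution E I H"
  then obtain m where "X \<subseteq> tyOf H m" using assms(1) unfolding realz_def by blast
  then show "\<exists>m. succT (delta E) X p \<subseteq> tyOf H m \<and> (is_literal m \<longleftrightarrow> LiteralTy \<in> succT (delta E) X p)"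
    using key[of "delta E" H "preds E" X m p] H assms(2) by (auto simp: is_solution_def)
qed

lemma realz_c:
  assumes "reqT (delta E) (ctyOf E I n) p"
  shows "realz E I (succT (delta E) (ctyOf E I n) p)"
  unfolding realz_def
proof (intro allI impI)
  fix H assume H: "is_solution E I H"
  then show "\<exists>m. succT (delta E) (ctyOf E I n) p \<subseteq> tyOf H m \<and> (is_literal m \<longleftrightarrow> LiteralTy \<in> succT (delta E) (ctyOf E I n) p)"
    using key[of "delta E" H "preds E" "ctyOf E I n" n p] ctyOf_sub[OF H] assms
    by (auto simp: is_solution_def)
qed


lemma G0_wf: "wf_tgraph (preds E) G0" and G0_sch: "satisfies_schema (delta E) G0"
  using sol0 by (auto simp: is_solution_def)

lemma realz_noLit: "realz E I X \<Longrightarrow> Ty T \<in> X \<Longrightarrow> LiteralTy \<notin> X"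
proof -
  assume r: "realz E I X" and T: "Ty T \<in> X"
  then obtain m where m: "X \<subseteq> tyOf G0 m" "is_literal m \<longleftrightarrow> LiteralTy \<in> X"
    using sol0 unfolding realz_def by blast
  then have "(m, Ty T) \<in> snd G0" using T by (auto simp: tyOf_def)
  then have "\<not> is_literal m" using G0_wf by (auto simp: wf_tgraph_def)
  then show ?thesis using m by simp
qed

lemma fin_sty: "finite (UNIV :: 't sty set)"
proof -
  have "finite (UNIV :: 't set)" using wf by (simp add: wf_setting_def)
  moreover have "(UNIV :: 't sty set) = Ty ` UNIV \<union> {LiteralTy}"
  proof (intro set_eqI iffI)
    fix x :: "'t sty" show "x \<in> Ty ` UNIV \<union> {LiteralTy}" by (cases x) auto
  qed auto
  ultimately show ?thesis by (metis finite_Un finite_imageI finite.intros)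
qed

lemma fin_P0: "finite {p. \<exists>T. delta E T p \<noteq> None}"
proof -
  have "{p. \<exists>T. delta E T p \<noteq> None} = snd ` {(T, p). delta E T p \<noteq> None}" by force
  then show ?thesis using wf by (simp add: wf_setting_def)
qed

lemma reqT_P0: "reqT (delta E) X p \<Longrightarrow> p \<in> {p. \<exists>T. delta E T p \<noteq> None}"
  by (auto simp: reqT_def)

lemma reqT_preds: "reqT (delta E) X p \<Longrightarrow> p \<in> preds E"
proof -
  assume "reqT (delta E) X p"
  then obtain T S \<mu> where "delta E T p = Some (S, \<mu>)" unfolding reqT_def by blast
  then show ?thesis using wf unfolding wf_setting_def by blast
qed

lemma U_wf: "wf_tgraph (preds E) (Ucan E I enc)"
proof -
  let ?P0 = "{p. \<exists>T. delta E T p \<noteq> None}"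
  have f1: "finite (ctrip E I)" using finite_subset[OF ctrip_sub[OF sol0]] G0_wf
    unfolding wf_tgraph_def by blast
  have "cedges E I enc \<subseteq> (\<lambda>(n, p). (n, p, nul enc (succT (delta E) (ctyOf E I n) p))) ` (fst ` snd G0 \<times> ?P0)"
  proof
    fix x assume x: "x \<in> cedges E I enc"
    then obtain a p b where abc: "x = (a, p, b)" by (cases x) auto
    then have c: "\<not> is_null a" "reqT (delta E) (ctyOf E I a) p" "b = nul enc (succT (delta E) (ctyOf E I a) p)"
      using x[unfolded abc cedges_iff] by auto
    then obtain T where "Ty T \<in> ctyOf E I a" by (auto simp: reqT_def)
    then have "(a, Ty T) \<in> snd G0" using ctyOf_sub[OF sol0] by (auto simp: tyOf_def)
    then have "a \<in> fst ` snd G0" by force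
    then show "x \<in> (\<lambda>(n, p). (n, p, nul enc (succT (delta E) (ctyOf E I n) p))) ` (fst ` snd G0 \<times> ?P0)"
      using abc c reqT_P0[OF c(2)] by force
  qed
  moreover have "finite (fst ` snd G0 \<times> ?P0)" using G0_wf fin_P0 unfolding wf_tgraph_def by blast
  ultimately have f2: "finite (cedges E I enc)" using finite_subset by blast
  have "nedges E I enc \<subseteq> (\<lambda>(X, p). (nul enc X, p, nul enc (succT (delta E) X p))) ` (UNIV \<times> ?P0)"
  proof
    fix x assume "x \<in> nedges E I enc"
    then obtain X p where X: "x = (nul enc X, p, nul enc (succT (delta E) X p))" "reqT (delta E) X p"
      unfolding nedges_def by blast
    show "x \<in> (\<lambda>(X, p). (nul enc X, p, nul enc (succT (delta E) X p))) ` (UNIV \<times> ?P0)"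
      by (rule rev_image_eqI[of "(X, p)"]) (use X reqT_P0[OF X(2)] in auto)
  qed
  moreover have "finite (UNIV \<times> ?P0 :: ('t sty set \<times> 'i) set)"
    using fin_sty fin_P0 by (intro finite_cartesian_product) (simp_all add: Finite_Set.finite_set)
  ultimately have f3: "finite (nedges E I enc)" using finite_subset by blast
  have f4: "finite (ctyp E I)" using finite_subset[OF ctyp_sub[OF sol0]] G0_wf
    unfolding wf_tgraph_def by blast
  have "ntyp E I enc \<subseteq> (\<lambda>(X, S). (nul enc X, S)) ` (UNIV \<times> UNIV)"
  proof
    fix x assume "x \<in> ntyp E I enc"
    then obtain X S where X: "x = (nul enc X, S)" unfolding ntyp_def by blast
    show "x \<in> (\<lambda>(X, S). (nul enc X, S)) ` (UNIV \<times> UNIV)"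
      by (rule rev_image_eqI[of "(X, S)"]) (use X in auto)
  qed
  moreover have "finite (UNIV \<times> UNIV :: ('t sty set \<times> 't sty) set)"
    using fin_sty by (intro finite_cartesian_product) (simp_all add: Finite_Set.finite_set)
  ultimately have f5: "finite (ntyp E I enc)" using finite_subset by blast
  have t1: "\<not> is_literal s \<and> p \<in> preds E" if mem: "(s, p, ob) \<in> fst (Ucan E I enc)" for s p ob
  proof -
    consider "(s, p, ob) \<in> ctrip E I" | "(s, p, ob) \<in> cedges E I enc" | "(s, p, ob) \<in> nedges E I enc"
      using mem unfolding Ucan_def fst_conv snd_conv by blast
    then show ?thesis
    proof cases
      case 1
      then have "(s, p, ob) \<in> fst G0" using ctrip_sub[OF sol0] by blast
      then show ?thesis using G0_wf unfolding wf_tgraph_def by blast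
    next
      case 2
      then have c: "reqT (delta E) (ctyOf E I s) p" unfolding cedges_iff by blast
      then obtain T S \<mu> where "Ty T \<in> ctyOf E I s" unfolding reqT_def by blast
      then have "(s, Ty T) \<in> snd G0" using ctyOf_sub[OF sol0] unfolding tyOf_def by blast
      then show ?thesis using G0_wf reqT_preds[OF c] unfolding wf_tgraph_def by blast
    next
      case 3
      then obtain X where X: "s = nul enc X" "realz E I X" "reqT (delta E) X p"
        unfolding nedges_iff by blast
      then obtain T S \<mu> where "Ty T \<in> X" unfolding reqT_def by blast
      then have "LiteralTy \<notin> X" using realz_noLit X(2) by blast
      then show ?thesis using X(1) reqT_preds[OF X(3)] nul_lit[of enc X] by simp
    qed
  qed
  have t2: "is_literal n" if mem: "(n, LiteralTy) \<in> snd (Ucan E I enc)" for n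
  proof -
    consider "(n, LiteralTy) \<in> ctyp E I" | "(n, LiteralTy) \<in> ntyp E I enc"
      using mem unfolding Ucan_def fst_conv snd_conv by blast
    then show ?thesis
    proof cases
      case 1
      then have "(n, LiteralTy) \<in> snd G0" using ctyp_sub[OF sol0] by blast
      then show ?thesis using G0_wf unfolding wf_tgraph_def by blast
    next
      case 2
      then obtain X where "n = nul enc X" "LiteralTy \<in> X" unfolding ntyp_iff by blast
      then show ?thesis by (simp add: nul_lit)
    qed
  qed
  have t3: "\<not> is_literal n" if mem: "(n, Ty T) \<in> snd (Ucan E I enc)" for n T
  proof -
    consider "(n, Ty T) \<in> ctyp E I" | "(n, Ty T) \<in> ntyp E I enc"
      using mem unfolding Ucan_def fst_conv snd_conv by blast
    then show ?thesis
    proof cases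
      case 1
      then have "(n, Ty T) \<in> snd G0" using ctyp_sub[OF sol0] by blast
      then show ?thesis using G0_wf unfolding wf_tgraph_def by blast
    next
      case 2
      then obtain X where X: "n = nul enc X" "realz E I X" "Ty T \<in> X" unfolding ntyp_iff by blast
      then have "LiteralTy \<notin> X" using realz_noLit by blast
      then show ?thesis using X(1) by (simp add: nul_lit)
    qed
  qed
  have "finite (fst (Ucan E I enc))" "finite (snd (Ucan E I enc))"
    using f1 f2 f3 f4 f5 by (simp_all add: Ucan_def)
  then show ?thesis unfolding wf_tgraph_def using t1 t2 t3 by blast
qed


lemma out_const: "\<not> is_null n \<Longrightarrow>
   (n, p, m) \<in> fst (Ucan E I enc) \<longleftrightarrow> (n, p, m) \<in> ctrip E I \<or> (n, p, m) \<in> cedges E I enc"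
proof -
  assume nn: "\<not> is_null n"
  have "(n, p, m) \<notin> nedges E I enc"
  proof
    assume "(n, p, m) \<in> nedges E I enc"
    then obtain X where "n = nul enc X" unfolding nedges_iff by blast
    then show False using nn nul_null by metis
  qed
  then show ?thesis unfolding Ucan_def fst_conv by blast
qed

lemma out_null: "(nul enc X, p, m) \<in> fst (Ucan E I enc) \<longleftrightarrow>
   realz E I X \<and> reqT (delta E) X p \<and> m = nul enc (succT (delta E) X p)"
proof -
  have nn: "is_null (nul enc X)" by (rule nul_null)
  have a: "(nul enc X, p, m) \<notin> ctrip E I" using nn unfolding ctrip_iff by blast
  have b: "(nul enc X, p, m) \<notin> cedges E I enc" using nn unfolding cedges_iff by blast
  have c: "(nul enc X, p, m) \<in> nedges E I enc \<longleftrightarrow>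
     realz E I X \<and> reqT (delta E) X p \<and> m = nul enc (succT (delta E) X p)"
    unfolding nedges_iff using nul_inj[OF inj] by blast
  show ?thesis using a b c unfolding Ucan_def fst_conv by blast
qed

lemma U_sch: "satisfies_schema (delta E) (Ucan E I enc)"
  unfolding satisfies_schema_def
proof (intro allI impI)
  fix T p S \<mu> n
  assume d: "delta E T p = Some (S, \<mu>)" and nT: "(n, Ty T) \<in> snd (Ucan E I enc)"
  let ?U = "Ucan E I enc"
  consider (c) "(n, Ty T) \<in> ctyp E I" | (nl) "(n, Ty T) \<in> ntyp E I enc"
    using nT unfolding Ucan_def snd_conv by blast
  then show "(\<forall>m. (n, p, m) \<in> fst ?U \<longrightarrow> (m, S) \<in> snd ?U) \<and>
           (\<mu> \<in> {One, Opt} \<longrightarrow> (\<forall>m m'. (n, p, m) \<in> fst ?U \<longrightarrow> (n, p, m') \<in> fst ?U \<longrightarrow> m = m')) \<and>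
           (\<mu> \<in> {One, Plus} \<longrightarrow> (\<exists>m. (n, p, m) \<in> fst ?U))"
  proof cases
    case c
    have nn: "\<not> is_null n" using c unfolding ctyp_iff by blast
    have TT: "Ty T \<in> ctyOf E I n" using c unfolding ctyOf_def by blast
    have A: "(m, S) \<in> snd ?U" if e: "(n, p, m) \<in> fst ?U" for m
    proof -
      consider (t) "(n, p, m) \<in> ctrip E I" | (ce) "(n, p, m) \<in> cedges E I enc"
        using e out_const[OF nn] by blast
      then show ?thesis
      proof cases
        case t
        have mn: "\<not> is_null m" using t unfolding ctrip_iff by blast
        have "(m, S) \<in> snd H" if H: "is_solution E I H" for H
        proof -
          have "(n, Ty T) \<in> snd H" using c H unfolding ctyp_iff by blast
          moreover have "(n, p, m) \<in> fst H" using t H unfolding ctrip_iff by blast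
          moreover have "satisfies_schema (delta E) H" using H unfolding is_solution_def by blast
          ultimately show ?thesis using d unfolding satisfies_schema_def by blast
        qed
        then have "(m, S) \<in> ctyp E I" using mn unfolding ctyp_iff by blast
        then show ?thesis unfolding Ucan_def snd_conv by blast
      next
        case ce
        then have r: "reqT (delta E) (ctyOf E I n) p" and m: "m = nul enc (succT (delta E) (ctyOf E I n) p)"
          unfolding cedges_iff by blast+
        have "S \<in> succT (delta E) (ctyOf E I n) p" using TT d unfolding succT_def by blast
        then have "(m, S) \<in> ntyp E I enc" using m realz_c[OF r] unfolding ntyp_iff by blast
        then show ?thesis unfolding Ucan_def snd_conv by blast
      qed
    qed
    have B: "m = m'" if mu: "\<mu> \<in> {One, Opt}" and e1: "(n, p, m) \<in> fst ?U" and e2: "(n, p, m') \<in> fst ?U" for m m'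
    proof -
      consider (tt) "(n, p, m) \<in> ctrip E I" "(n, p, m') \<in> ctrip E I"
        | (cc) "(n, p, m) \<in> cedges E I enc" "(n, p, m') \<in> cedges E I enc"
        | (mix) "(n, p, m) \<in> ctrip E I \<or> (n, p, m') \<in> ctrip E I"
                "(n, p, m) \<in> cedges E I enc \<or> (n, p, m') \<in> cedges E I enc"
        using e1 e2 out_const[OF nn] by blast
      then show ?thesis
      proof cases
        case tt
        have "(n, Ty T) \<in> snd G0" using c ctyp_sub[OF sol0] by blast
        moreover have "(n, p, m) \<in> fst G0" "(n, p, m') \<in> fst G0" using tt ctrip_sub[OF sol0] by blast+
        ultimately show ?thesis using G0_sch d mu unfolding satisfies_schema_def by blast
      next
        case cc
        then show ?thesis unfolding cedges_iff by blast
      next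
        case mix
        then have "\<exists>x. (n, p, x) \<in> ctrip E I" by blast
        then have False using mix(2) unfolding cedges_iff by blast
        then show ?thesis ..
      qed
    qed
    have C: "\<exists>m. (n, p, m) \<in> fst ?U" if mu: "\<mu> \<in> {One, Plus}"
    proof (cases "\<exists>m. (n, p, m) \<in> ctrip E I")
      case True
      then show ?thesis using out_const[OF nn] by blast
    next
      case False
      have r: "reqT (delta E) (ctyOf E I n) p" using TT d mu unfolding reqT_def by blast
      have "(n, p, nul enc (succT (delta E) (ctyOf E I n) p)) \<in> cedges E I enc"
        using nn r False unfolding cedges_iff by blast
      then show ?thesis using out_const[OF nn] by blast
    qed
    show ?thesis using A B C by blast
  next
    case nl
    then obtain X where X: "n = nul enc X" "realz E I X" "Ty T \<in> X" unfolding ntyp_iff by blast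
    have A: "(m, S) \<in> snd ?U" if e: "(n, p, m) \<in> fst ?U" for m
    proof -
      have r: "reqT (delta E) X p" and m: "m = nul enc (succT (delta E) X p)"
        using e unfolding X(1) out_null by blast+
      have "S \<in> succT (delta E) X p" using X(3) d unfolding succT_def by blast
      then have "(m, S) \<in> ntyp E I enc" using m realz_succ[OF X(2) r] unfolding ntyp_iff by blast
      then show ?thesis unfolding Ucan_def snd_conv by blast
    qed
    have B: "m = m'" if e1: "(n, p, m) \<in> fst ?U" and e2: "(n, p, m') \<in> fst ?U" for m m'
      using e1 e2 unfolding X(1) out_null by blast
    have C: "\<exists>m. (n, p, m) \<in> fst ?U" if mu: "\<mu> \<in> {One, Plus}"
    proof -
      have r: "reqT (delta E) X p" using X(3) d mu unfolding reqT_def by blast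
      show ?thesis unfolding X(1) out_null using X(2) r by blast
    qed
    show ?thesis using A B C by blast
  qed
qed

lemma U_st: "d \<in> sigma E \<Longrightarrow> satisfies_sttgd (finterp E) I (Ucan E I enc) d"
  unfolding satisfies_sttgd_def
proof (intro allI impI ballI)
  fix \<nu> a assume d: "d \<in> sigma E" and body: "\<forall>(R, xs)\<in>set (fst d). map \<nu> xs \<in> I R"
    and a: "a \<in> set (snd d)"
  have all: "holds_hatom (finterp E) H \<nu> a" if H: "is_solution E I H" for H
    using H d body a unfolding is_solution_def satisfies_sttgd_def by blast
  show "holds_hatom (finterp E) (Ucan E I enc) \<nu> a"
  proof (cases a)
    case (TripleA s p ob)
    then have "\<forall>H. is_solution E I H \<longrightarrow> (eval_tterm (finterp E) \<nu> s, p, eval_tterm (finterp E) \<nu> ob) \<in> fst H" using all by simp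
    then have "(eval_tterm (finterp E) \<nu> s, p, eval_tterm (finterp E) \<nu> ob) \<in> ctrip E I"
      using eval_nonnull unfolding ctrip_iff by blast
    then show ?thesis using TripleA by (simp add: Ucan_def)
  next
    case (TypeA T t)
    then have "\<forall>H. is_solution E I H \<longrightarrow> (eval_tterm (finterp E) \<nu> t, Ty T) \<in> snd H" using all by simp
    then have "(eval_tterm (finterp E) \<nu> t, Ty T) \<in> ctyp E I"
      using eval_nonnull unfolding ctyp_iff by blast
    then show ?thesis using TypeA by (simp add: Ucan_def)
  next
    case (LiteralA t)
    then have "\<forall>H. is_solution E I H \<longrightarrow> (eval_tterm (finterp E) \<nu> t, LiteralTy) \<in> snd H" using all by simp
    then have "(eval_tterm (finterp E) \<nu> t, LiteralTy) \<in> ctyp E I"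
      using eval_nonnull unfolding ctyp_iff by blast
    then show ?thesis using LiteralA by (simp add: Ucan_def)
  qed
qed

lemma U_sol: "is_solution E I (Ucan E I enc)"
  unfolding is_solution_def using U_wf U_sch U_st by blast


lemma U_nodes:
  assumes "n \<in> graph_nodes (fst (Ucan E I enc))" "is_null n"
  shows "\<exists>Z. n = nul enc Z \<and> realz E I Z"
proof -
  consider (sb) p ob where "(n, p, ob) \<in> fst (Ucan E I enc)" | (ob) s p where "(s, p, n) \<in> fst (Ucan E I enc)"
    using assms(1) unfolding graph_nodes_def by blast
  then show ?thesis
  proof cases
    case sb
    consider "(n, p, ob) \<in> ctrip E I" | "(n, p, ob) \<in> cedges E I enc" | "(n, p, ob) \<in> nedges E I enc"
      using sb unfolding Ucan_def fst_conv by blast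
    then show ?thesis
    proof cases
      case 1 then show ?thesis using assms(2) unfolding ctrip_iff by blast
    next
      case 2 then show ?thesis using assms(2) unfolding cedges_iff by blast
    next
      case 3 then show ?thesis unfolding nedges_iff by blast
    qed
  next
    case ob
    consider "(s, p, n) \<in> ctrip E I" | "(s, p, n) \<in> cedges E I enc" | "(s, p, n) \<in> nedges E I enc"
      using ob unfolding Ucan_def fst_conv by blast
    then show ?thesis
    proof cases
      case 1 then show ?thesis using assms(2) unfolding ctrip_iff by blast
    next
      case 2
      then have "reqT (delta E) (ctyOf E I s) p" "n = nul enc (succT (delta E) (ctyOf E I s) p)"
        unfolding cedges_iff by blast+
      then show ?thesis using realz_c by blast
    next
      case 3
      then obtain X where "realz E I X" "reqT (delta E) X p" "n = nul enc (succT (delta E) X p)"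
        unfolding nedges_iff by blast
      then show ?thesis using realz_succ by blast
    qed
  qed
qed

lemma U_sim:
  assumes H: "is_solution E I H"
  shows "simulated_by (fst (Ucan E I enc)) (fst H)"
proof -
  have Hs: "satisfies_schema (delta E) H" and Hw: "wf_tgraph (preds E) H"
    using H unfolding is_solution_def by blast+
  define R where "R = {(n, n) | n. \<not> is_null n} \<union>
     {(nul enc X, m) | X m. realz E I X \<and> X \<subseteq> tyOf H m \<and> (is_literal m \<longleftrightarrow> LiteralTy \<in> X)}"
  have hlp: "(is_literal n \<longleftrightarrow> is_literal m) \<and> (\<not> is_null n \<longrightarrow> n = m) \<and>
        (\<forall>p n'. (n, p, n') \<in> fst (Ucan E I enc) \<longrightarrow> (\<exists>m'. (m, p, m') \<in> fst H \<and> (n', m') \<in> R))"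
    if nm: "(n, m) \<in> R" for n m
  proof -
    consider (k) "\<not> is_null n" "m = n"
      | (u) X where "n = nul enc X" "realz E I X" "X \<subseteq> tyOf H m" "is_literal m \<longleftrightarrow> LiteralTy \<in> X"
      using nm unfolding R_def by blast
    then show ?thesis
    proof cases
      case k
      have "\<exists>m'. (m, p, m') \<in> fst H \<and> (n', m') \<in> R" if e: "(n, p, n') \<in> fst (Ucan E I enc)" for p n'
      proof -
        consider (t) "(n, p, n') \<in> ctrip E I" | (ce) "(n, p, n') \<in> cedges E I enc"
          using e out_const[OF k(1)] by blast
        then show ?thesis
        proof cases
          case t
          then have "(n, p, n') \<in> fst H" "\<not> is_null n'" using H unfolding ctrip_iff by blast+
          then show ?thesis using k(2) unfolding R_def by blast
        next
          case ce
          then have r: "reqT (delta E) (ctyOf E I n) p"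
            and n': "n' = nul enc (succT (delta E) (ctyOf E I n) p)"
            unfolding cedges_iff by blast+
          obtain m' where m': "(n, p, m') \<in> fst H" "succT (delta E) (ctyOf E I n) p \<subseteq> tyOf H m'"
            "is_literal m' \<longleftrightarrow> LiteralTy \<in> succT (delta E) (ctyOf E I n) p"
            using key[OF Hs Hw ctyOf_sub[OF H] r] by blast
          then show ?thesis using k(2) n' realz_c[OF r] unfolding R_def by blast
        qed
      qed
      then show ?thesis using k by blast
    next
      case u
      have "\<exists>m'. (m, p, m') \<in> fst H \<and> (n', m') \<in> R" if e: "(n, p, n') \<in> fst (Ucan E I enc)" for p n'
      proof -
        have r: "reqT (delta E) X p" and n': "n' = nul enc (succT (delta E) X p)"
          using e unfolding u(1) out_null by blast+
        obtain m' where m': "(m, p, m') \<in> fst H" "succT (delta E) X p \<subseteq> tyOf H m'"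
          "is_literal m' \<longleftrightarrow> LiteralTy \<in> succT (delta E) X p"
          using key[OF Hs Hw u(3) r] by blast
        then show ?thesis using n' realz_succ[OF u(2) r] unfolding R_def by blast
      qed
      moreover have "is_literal n \<longleftrightarrow> is_literal m" using u(1,4) nul_lit by metis
      moreover have "is_null n" using u(1) nul_null by metis
      ultimately show ?thesis by blast
    qed
  qed
  have sim: "is_simulation R (fst (Ucan E I enc)) (fst H)"
    unfolding is_simulation_def using hlp by fast
  show ?thesis unfolding simulated_by_def
  proof
    fix n assume n: "n \<in> graph_nodes (fst (Ucan E I enc))"
    show "\<exists>R m. is_simulation R (fst (Ucan E I enc)) (fst H) \<and> (n, m) \<in> R"
    proof (cases "is_null n")
      case False
      then have "(n, n) \<in> R" unfolding R_def by blast
      then show ?thesis using sim by blast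
    next
      case True
      then obtain Z where Z: "n = nul enc Z" "realz E I Z" using U_nodes[OF n] by blast
      then obtain m where "Z \<subseteq> tyOf H m" "is_literal m \<longleftrightarrow> LiteralTy \<in> Z"
        using H unfolding realz_def by blast
      then have "(n, m) \<in> R" using Z unfolding R_def by blast
      then show ?thesis using sim by blast
    qed
  qed
qed

end

theorem theorem6:
  fixes E :: "('r, 'i, 't, 'f, 'v, 'l) setting"
    and \<Q> :: "('i, 'l) query set"
    and Q :: "('i, 'l) query"
    and I :: "('r, 'l) rinstance"
  assumes "wf_setting E"
    and "consistent_setting E"
    and "robust_under_simulation \<Q>"
    and "Q \<in> \<Q>"
    and "is_instance (arity E) I"
    and "consistent_instance (fds E) I"
  shows "certain_true E I Q \<longleftrightarrow>
         (\<forall>U. universal_simulation_solution E I U \<longrightarrow> Q (fst U))"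
proof
  assume "certain_true E I Q"
  then show "\<forall>U. universal_simulation_solution E I U \<longrightarrow> Q (fst U)"
    unfolding certain_true_def universal_simulation_solution_def by blast
next
  assume all: "\<forall>U. universal_simulation_solution E I U \<longrightarrow> Q (fst U)"
  obtain G0 where G0: "is_solution E I G0"
    using assms(2,5,6) unfolding consistent_setting_def by blast
  have ft: "finite (UNIV :: 't set)" using assms(1) by (simp add: wf_setting_def)
  have "(UNIV :: 't sty set) = Ty ` UNIV \<union> {LiteralTy}"
  proof (intro set_eqI iffI)
    fix x :: "'t sty" show "x \<in> Ty ` UNIV \<union> {LiteralTy}" by (cases x) auto
  qed auto
  then have "finite (UNIV :: 't sty set)" using ft by (metis finite_Un finite_imageI finite.intros)
  then have "finite (UNIV :: 't sty set set)" by (simp add: Finite_Set.finite_set)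
  then obtain enc :: "'t sty set \<Rightarrow> nat" and k where "enc ` UNIV = {i. i < k}" "inj_on enc UNIV"
    using finite_imp_inj_to_nat_seg by blast
  then have inj: "inj enc" by simp
  interpret c: ctx E I enc G0 using assms(1) inj G0 by unfold_locales
  have uni: "universal_simulation_solution E I (Ucan E I enc)"
    unfolding universal_simulation_solution_def using c.U_sol c.U_sim by blast
  then have qU: "Q (fst (Ucan E I enc))" using all by blast
  show "certain_true E I Q"
    unfolding certain_true_def
  proof (intro allI impI)
    fix G assume "is_solution E I G"
    then have "simulated_by (fst (Ucan E I enc)) (fst G)" by (rule c.U_sim)
    then show "Q (fst G)" using assms(3,4) qU unfolding robust_under_simulation_def by blast
  qed
qed

end
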